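(* The urn process is reversible in time: $(U_0,U_1,\dots,U_n)$ and $(U_n,U_{n-1},\dots,U_0)$ are equal in distribution.
   Context: Urn process: let $n\ge2$. An urn initially contains $n$ black balls. It is emptied in $n$ steps: in each of the first $n-1$ steps a uniformly random pair of balls is removed from the urn and replaced by one red ball; in step $n$ the last remaining ball is removed. $U_k$ is the number of red balls in the urn after $k$ steps, $0\le k\le n$. Equivalently, $(U_k)$ is the Markov chain with $U_0=0$ and $\mathbf P(U_{k+1}=u-1\mid U_k=u)=\binom u2/\binom{n-k}2$, $\mathbf P(U_{k+1}=u\mid U_k=u)=u(n-k-u)/\binom{n-k}2$, $\mathbf P(U_{k+1}=u+1\mid U_k=u)=\binom{n-k-u}2/\binom{n-k}2$ (for $k\le n-2$), and $U_n=0$. *)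

theory Defs
  imports Complex_Main
begin

text \<open>Transition probability of the urn chain from step k (state u) to step k+1 (state v),
  for an urn that initially contains n black balls.\<close>
definition urn_trans :: "nat \<Rightarrow> nat \<Rightarrow> nat \<Rightarrow> nat \<Rightarrow> real" where
  "urn_trans n k u v =
     (if k + 2 \<le> n then
        (if 1 \<le> u \<and> v = u - 1 then real (u choose 2) / real ((n - k) choose 2)
         else if v = u then real (u * (n - k - u)) / real ((n - k) choose 2)
         else if v = u + 1 then real ((n - k - u) choose 2) / real ((n - k) choose 2)
         else 0)
      else (if v = 0 then 1 else 0))"

definition urn_path_prob :: "nat \<Rightarrow> nat list \<Rightarrow> real" where
  "urn_path_prob n us =
     (if length us = n + 1 \<and> us ! 0 = 0
      then (\<Prod>k<n. urn_trans n k (us ! k) (us ! Suc k))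
      else 0)"

end

theory Submission imports Defs begin
lemma c2: "real (m choose 2) = real m * (real m - 1) / 2"
  by (induction m) (auto simp: numeral_2_eq_2 field_simps)

definition hh :: "nat \<Rightarrow> nat \<Rightarrow> nat \<Rightarrow> real" where
 "hh n k u = (if k = 0 \<or> n \<le> k then 1 else
    fact(k-1)*fact k*fact(n-k)*fact(n-k-1)/(fact(u-1)*fact u*fact(k-u)*fact(n-k-u)*fact(n-1)))"

lemma hh_mid: "0 < k \<Longrightarrow> k < n \<Longrightarrow> hh n k u =
    fact(k-1)*fact k*fact(n-k)*fact(n-k-1)/(fact(u-1)*fact u*fact(k-u)*fact(n-k-u)*fact(n-1))"
  unfolding hh_def by simp

lemma up_case:
  assumes "1 \<le> k" "k + 2 \<le> n" "1 \<le> u" "u \<le> k" "u + 2 \<le> n - k"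
  shows "hh n k u * (real ((n-k-u) choose 2)/real ((n-k) choose 2))
       = hh n (Suc k) (u+1) * (real ((u+1) choose 2) / real ((n - (n-1-k)) choose 2))"
proof -
  obtain w where w: "u = Suc w" using assms by (cases u) auto
  obtain a where a: "k = Suc w + a" using assms w by (metis le_add_diff_inverse)
  obtain b where b: "n = k + Suc (Suc (Suc (w + b)))"
  proof -
    have "n = k + Suc (Suc (Suc (w + (n - k - u - 2))))" using assms w by simp
    then show ?thesis using that by blast
  qed
  define A where "A = (fact (w+a) :: real)"
  define B where "B = (fact (w+b) :: real)"
  define W where "W = (fact w :: real)"
  define FA where "FA = (fact a :: real)"
  define FB where "FB = (fact b :: real)"
  define N where "N = (fact (n-1) :: real)"
  define x1 where "x1 = real w + 1"
  define x2 where "x2 = real w + 2"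
  define y1 where "y1 = real b + 1"
  define y2 where "y2 = real b + 2"
  define z1 where "z1 = real w + real b + 1"
  define z2 where "z2 = real w + real b + 2"
  define z3 where "z3 = real w + real b + 3"
  define s1 where "s1 = real w + real a + 1"
  define s2 where "s2 = real w + real a + 2"
  note defs = A_def B_def W_def FA_def FB_def x1_def x2_def y1_def y2_def z1_def z2_def z3_def s1_def s2_def
  have pos: "A > 0" "B > 0" "W > 0" "FA > 0" "FB > 0" "N > 0" "x1>0" "x2>0" "y1>0" "y2>0"
    "z1>0" "z2>0" "z3>0" "s1>0" "s2>0" unfolding defs N_def by auto
  have e1: "fact (k-1) = A" "fact k = s1*A" 
    "fact (n-k-1) = z2*z1*B" "fact (u-1) = W" "fact u = x1*W" "fact (k-u) = FA"
    "fact (n-k-u) = y2*y1*FB" "fact (Suc k - 1) = s1*A" "fact (Suc k) = s2*s1*A"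
    "fact (n - Suc k) = z2*z1*B" "fact (n - Suc k - 1) = z1*B"
    "fact (u+1-1) = x1*W" "fact (u+1) = x2*x1*W" "fact (Suc k - (u+1)) = FA"
    "fact (n - Suc k - (u+1)) = FB"
    by (simp_all add: a b w defs algebra_simps)
  have nk: "n - k = Suc (Suc (Suc (w+b)))" by (simp add: b)
  have e2: "fact (n-k) = z3*z2*z1*B"
    unfolding nk fact_Suc defs by (simp add: algebra_simps)
  have h1: "hh n k u = A * (s1*A) * (z3*z2*z1*B) * (z2*z1*B)
     / (W * (x1*W) * FA * (y2*y1*FB) * N)"
    using assms by (subst hh_mid, simp, simp) (simp only: e1 e2 N_def)
  have h2: "hh n (Suc k) (u+1) = (s1*A) * (s2*s1*A) * (z2*z1*B) * (z1*B)
     / ((x1*W) * (x2*x1*W) * FA * FB * N)"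
    using assms by (subst hh_mid, simp, simp) (simp only: e1 N_def)
  have c: "real ((n-k-u) choose 2) = y2*y1/2" "real ((n-k) choose 2) = z3*z2/2"
     "real ((u+1) choose 2) = x2*x1/2" "real ((n - (n-1-k)) choose 2) = s2*s1/2"
    unfolding c2 using assms by (simp_all add: a b w defs algebra_simps)
  show ?thesis unfolding h1 h2 c using pos by (simp add: field_simps)
qed

lemma stay_case:
  assumes "1 \<le> k" "k + 2 \<le> n" "1 \<le> u" "u \<le> k" "u + 1 \<le> n - k"
  shows "hh n k u * (real (u * (n-k-u))/real ((n-k) choose 2))
       = hh n (Suc k) u * (real (u * (n - (n-1-k) - u)) / real ((n - (n-1-k)) choose 2))"
proof -
  obtain w where w: "u = Suc w" using assms by (cases u) auto
  obtain a where a: "k = Suc w + a" using assms w by (metis le_add_diff_inverse)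
  obtain b where b: "n = k + Suc (Suc (w + b))"
  proof -
    have "n = k + Suc (Suc (w + (n - k - u - 1)))" using assms w by simp
    then show ?thesis using that by blast
  qed
  define A where "A = (fact (w+a) :: real)"
  define B where "B = (fact (w+b) :: real)"
  define W where "W = (fact w :: real)"
  define FA where "FA = (fact a :: real)"
  define FB where "FB = (fact b :: real)"
  define N where "N = (fact (n-1) :: real)"
  define x1 where "x1 = real w + 1"
  define y1 where "y1 = real b + 1"
  define a1 where "a1 = real a + 1"
  define z1 where "z1 = real w + real b + 1"
  define z2 where "z2 = real w + real b + 2"
  define s1 where "s1 = real w + real a + 1"
  define s2 where "s2 = real w + real a + 2"
  note defs = A_def B_def W_def FA_def FB_def x1_def y1_def a1_def z1_def z2_def s1_def s2_def
  have pos: "A > 0" "B > 0" "W > 0" "FA > 0" "FB > 0" "N > 0" "x1>0" "y1>0" "a1>0"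
    "z1>0" "z2>0" "s1>0" "s2>0" unfolding defs N_def by auto
  have e1: "fact (k-1) = A" "fact k = s1*A" "fact (n-k) = z2*z1*B"
    "fact (n-k-1) = z1*B" "fact (u-1) = W" "fact u = x1*W" "fact (k-u) = FA"
    "fact (n-k-u) = y1*FB" "fact (Suc k - 1) = s1*A" "fact (Suc k) = s2*s1*A"
    "fact (n - Suc k) = z1*B" "fact (n - Suc k - 1) = B"
    "fact (Suc k - u) = a1*FA"
    "fact (n - Suc k - u) = FB"
    by (simp_all add: a b w defs algebra_simps)
  have h1: "hh n k u = A * (s1*A) * (z2*z1*B) * (z1*B)
     / (W * (x1*W) * FA * (y1*FB) * N)"
    using assms by (subst hh_mid, simp, simp) (simp only: e1 N_def)
  have h2: "hh n (Suc k) u = (s1*A) * (s2*s1*A) * (z1*B) * B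
     / (W * (x1*W) * (a1*FA) * FB * N)"
    using assms by (subst hh_mid, simp, simp) (simp only: e1 N_def)
  have c: "real ((n-k) choose 2) = z2*z1/2"
     "real (u * (n-k-u)) = x1*y1" "real (u * (n - (n-1-k) - u)) = x1*a1"
     "real ((n - (n-1-k)) choose 2) = s2*s1/2"
    unfolding c2 using assms by (simp_all add: a b w defs algebra_simps)
  show ?thesis unfolding h1 h2 c using pos by (simp add: field_simps)
qed

lemma down_case:
  assumes "1 \<le> k" "k + 2 \<le> n" "2 \<le> u" "u \<le> k" "u \<le> n - k"
  shows "hh n k u * (real (u choose 2)/real ((n-k) choose 2))
       = hh n (Suc k) (u-1) * (real ((n - (n-1-k) - (u-1)) choose 2) / real ((n - (n-1-k)) choose 2))"
proof -
  obtain w where w: "u = Suc (Suc w)"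
  proof -
    have "u = Suc (Suc (u - 2))" using assms by simp
    then show ?thesis using that by blast
  qed
  obtain a where a: "k = Suc (Suc w) + a"
  proof -
    have "k = Suc (Suc w) + (k - u)" using assms w by simp
    then show ?thesis using that by blast
  qed
  obtain b where b: "n = k + Suc (Suc (w + b))"
  proof -
    have "n = k + Suc (Suc (w + (n - k - u)))" using assms w by simp
    then show ?thesis using that by blast
  qed
  define A where "A = (fact (w+a) :: real)"
  define B where "B = (fact (w+b) :: real)"
  define W where "W = (fact w :: real)"
  define FA where "FA = (fact a :: real)"
  define FB where "FB = (fact b :: real)"
  define N where "N = (fact (n-1) :: real)"
  define x1 where "x1 = real w + 1"
  define x2 where "x2 = real w + 2"
  define a1 where "a1 = real a + 1"
  define a2 where "a2 = real a + 2"
  define z1 where "z1 = real w + real b + 1"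
  define z2 where "z2 = real w + real b + 2"
  define s1 where "s1 = real w + real a + 1"
  define s2 where "s2 = real w + real a + 2"
  define s3 where "s3 = real w + real a + 3"
  note defs = A_def B_def W_def FA_def FB_def x1_def x2_def a1_def a2_def z1_def z2_def s1_def s2_def s3_def
  have pos: "A > 0" "B > 0" "W > 0" "FA > 0" "FB > 0" "N > 0" "x1>0" "x2>0" "a1>0" "a2>0"
    "z1>0" "z2>0" "s1>0" "s2>0" "s3>0" unfolding defs N_def by auto
  have e1: "fact (k-1) = s1*A" "fact (n-k) = z2*z1*B"
    "fact (n-k-1) = z1*B" "fact (u-1) = x1*W" "fact (k-u) = FA"
    "fact (n-k-u) = FB" "fact (Suc k - 1) = s2*s1*A"
    "fact (n - Suc k) = z1*B" "fact (n - Suc k - 1) = B"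
    "fact (u-1-1) = W"
    "fact (n - Suc k - (u-1)) = FB"
    by (simp_all add: a b w defs algebra_simps)
  have kk: "k = Suc (Suc (w+a))" "Suc (Suc (Suc (w+a))) = Suc k" "Suc k - (u-1) = Suc (Suc a)"
    by (simp_all add: a w)
  have e2a: "fact k = s2*s1*A" "fact (Suc k) = s3*s2*s1*A"
    unfolding kk(1) fact_Suc by (simp_all add: defs algebra_simps)
  have e2b: "fact u = x2*x1*W"
    unfolding w fact_Suc by (simp_all add: defs algebra_simps)
  have e2c: "fact (Suc k - (u-1)) = a2*a1*FA"
    unfolding kk(3) fact_Suc by (simp_all add: defs algebra_simps)
  note e2 = e2a e2b e2c
  have h1: "hh n k u = (s1*A) * (s2*s1*A) * (z2*z1*B) * (z1*B)
     / ((x1*W) * (x2*x1*W) * FA * FB * N)"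
    using assms by (subst hh_mid, simp, simp) (simp only: e1 e2 N_def)
  have h2: "hh n (Suc k) (u-1) = (s2*s1*A) * (s3*s2*s1*A) * (z1*B) * B
     / (W * (x1*W) * (a2*a1*FA) * FB * N)"
    using assms by (subst hh_mid, simp, simp) (simp only: e1 e2 N_def)
  have c: "real ((n-k) choose 2) = z2*z1/2"
     "real (u choose 2) = x2*x1/2" "real ((n - (n-1-k) - (u-1)) choose 2) = a2*a1/2"
     "real ((n - (n-1-k)) choose 2) = s3*s2/2"
    unfolding c2 using assms by (simp_all add: a b w defs algebra_simps)
  show ?thesis unfolding h1 h2 c using pos by (simp add: field_simps)
qed

definition valid :: "nat \<Rightarrow> nat \<Rightarrow> nat \<Rightarrow> bool" where
 "valid n k u \<longleftrightarrow> (if k = 0 \<or> n \<le> k then u = 0 else 1 \<le> u \<and> u \<le> k \<and> u \<le> n - k)"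

lemma trans01: "2 \<le> n \<Longrightarrow> urn_trans n 0 0 1 = 1"
proof -
  assume n: "2 \<le> n"
  have "real (n choose 2) > 0" unfolding c2 using n by auto
  then show ?thesis unfolding urn_trans_def using n by simp
qed

lemma step_eq:
  assumes n: "2 \<le> n" and k: "k < n" and vu: "valid n k u" and vv: "valid n (Suc k) v"
  shows "hh n k u * urn_trans n k u v = hh n (Suc k) v * urn_trans n (n-1-k) v u"
proof (cases "k = 0")
  case True
  then have u: "u = 0" and v: "v = 1" using vu vv n unfolding valid_def by auto
  have "hh n 1 1 = 1" using n by (subst hh_mid) auto
  moreover have "urn_trans n (n-1) 1 0 = 1" unfolding urn_trans_def using n by simp
  ultimately show ?thesis using True u v trans01[OF n] by (simp add: hh_def)
next
  case False
  show ?thesis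
  proof (cases "k = n - 1")
    case True
    then have u: "u = 1" and v: "v = 0" using vu vv n False unfolding valid_def by (auto split: if_splits)
    have "hh n k 1 = 1" using n True False by (subst hh_mid) auto
    moreover have "urn_trans n k 1 0 = 1" unfolding urn_trans_def using n True by simp
    ultimately show ?thesis using True u v trans01[OF n] by (simp add: hh_def)
  next
    case False2: False
    have k1: "1 \<le> k" "k + 2 \<le> n" using False False2 k by auto
    have u: "1 \<le> u" "u \<le> k" "u \<le> n - k" using vu k1 unfolding valid_def by (auto split: if_splits)
    have v: "1 \<le> v" "v \<le> Suc k" "v \<le> n - Suc k" using vv k1 unfolding valid_def by (auto split: if_splits)
    have k2: "n - 1 - k + 2 \<le> n" using k1 by auto
    have nsu: "Suc u \<noteq> u - Suc 0" "u \<noteq> u - Suc 0" using u by auto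
    consider "v = u + 1" | "v = u" | "v + 1 = u" | "v \<noteq> u + 1 \<and> v \<noteq> u \<and> v + 1 \<noteq> u" by blast
    then show ?thesis
    proof cases
      case 1
      have "u + 2 \<le> n - k" using v 1 by auto
      from up_case[OF k1 u(1,2) this] show ?thesis
        using 1 k1 k2 u unfolding urn_trans_def by (simp add: nsu)
    next
      case 2
      have "u + 1 \<le> n - k" using v 2 by auto
      from stay_case[OF k1 u(1,2) this] show ?thesis
        using 2 k1 k2 u unfolding urn_trans_def by (simp add: nsu)
    next
      case 3
      have "2 \<le> u" using v 3 by auto
      have uv: "u = Suc v" using 3 by simp
      have nv: "Suc v \<noteq> v - Suc 0" by simp
      from down_case[OF k1 \<open>2 \<le> u\<close> u(2,3)] show ?thesis
        unfolding uv urn_trans_def using k1 k2 v by (simp add: nv)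
    next
      case 4
      have d1: "v \<noteq> u - 1" "v \<noteq> u" "v \<noteq> u + 1" "u \<noteq> v - 1" "u \<noteq> v" "u \<noteq> v + 1"
        using 4 u v by auto
      have "urn_trans n k u v = 0" unfolding urn_trans_def using k1 d1 by simp
      moreover have "urn_trans n (n - 1 - k) v u = 0" unfolding urn_trans_def using k2 d1 by simp
      ultimately show ?thesis by simp
    qed
  qed
qed

definition LL :: "nat \<Rightarrow> (nat \<Rightarrow> nat) \<Rightarrow> real" where
  "LL n a = (\<Prod>k<n. urn_trans n k (a k) (a (Suc k)))"

lemma step_valid:
  assumes "valid n k u" "k < n" "urn_trans n k u v \<noteq> 0"
  shows "valid n (Suc k) v"
  using assms unfolding valid_def urn_trans_def
  by (auto split: if_splits)

lemma path_valid:
  assumes a0: "a 0 = 0" and L: "LL n a \<noteq> 0"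
  shows "\<forall>k\<le>n. valid n k (a k)"
proof (intro allI impI)
  fix k assume "k \<le> n"
  then show "valid n k (a k)"
  proof (induction k)
    case 0 then show ?case using a0 unfolding valid_def by simp
  next
    case (Suc k)
    have "urn_trans n k (a k) (a (Suc k)) \<noteq> 0"
      using L Suc.prems unfolding LL_def by (auto simp: prod_zero_iff)
    then show ?case using step_valid Suc by simp
  qed
qed

lemma valid_sym: "k \<le> n \<Longrightarrow> valid n (n - k) u = valid n k u"
  unfolding valid_def by auto

lemma hh_pos: "hh n k u > 0"
  unfolding hh_def by simp

lemma hh_nz: "hh n k u \<noteq> 0"
  using hh_pos[of n k u] by simp

lemma eq_valid:
  assumes n: "2 \<le> n" and va: "\<forall>k\<le>n. valid n k (a k)"
  shows "LL n a = (\<Prod>k<n. urn_trans n (n - 1 - k) (a (Suc k)) (a k))"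
proof -
  have "(\<Prod>k<n. hh n k (a k) * urn_trans n k (a k) (a (Suc k)))
      = (\<Prod>k<n. hh n (Suc k) (a (Suc k)) * urn_trans n (n - 1 - k) (a (Suc k)) (a k))"
    by (rule prod.cong) (use va n step_eq in auto)
  then have eq: "(\<Prod>k<n. hh n k (a k)) * LL n a
      = (\<Prod>k<n. hh n (Suc k) (a (Suc k))) * (\<Prod>k<n. urn_trans n (n - 1 - k) (a (Suc k)) (a k))"
    unfolding LL_def prod.distrib by simp
  obtain m where m: "n = Suc m" using n by (cases n) auto
  have "(\<Prod>k<n. hh n k (a k)) = (\<Prod>k<m. hh n (Suc k) (a (Suc k)))"
    unfolding m prod.lessThan_Suc_shift by (simp add: hh_def)
  moreover have "(\<Prod>k<n. hh n (Suc k) (a (Suc k))) = (\<Prod>k<m. hh n (Suc k) (a (Suc k)))"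
    unfolding m prod.lessThan_Suc by (simp add: hh_def)
  moreover have "(\<Prod>k<m. hh n (Suc k) (a (Suc k))) > 0"
    by (rule prod_pos) (simp add: hh_pos)
  ultimately show ?thesis using eq by (simp add: hh_nz)
qed

lemma LL_rev: "LL n (\<lambda>k. a (n - k)) = (\<Prod>k<n. urn_trans n (n - 1 - k) (a (Suc k)) (a k))"
proof -
  have "(\<Prod>k<n. urn_trans n (n - 1 - k) (a (Suc k)) (a k))
     = (\<Prod>i<n. urn_trans n (n - 1 - (n - Suc i)) (a (Suc (n - Suc i))) (a (n - Suc i)))"
    by (rule prod.nat_diff_reindex[symmetric])
  also have "\<dots> = LL n (\<lambda>k. a (n - k))"
    unfolding LL_def by (rule prod.cong) (auto simp: Suc_diff_Suc)
  finally show ?thesis by simp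
qed

lemma LL_cong: "(\<And>k. k \<le> n \<Longrightarrow> a k = b k) \<Longrightarrow> LL n a = LL n b"
  unfolding LL_def by (rule prod.cong) auto

lemma key:
  assumes n: "2 \<le> n"
  shows "(if a n = 0 then LL n (\<lambda>k. a (n - k)) else 0) = (if a 0 = 0 then LL n a else 0)"
proof -
  have A: "a n = 0 \<and> LL n a = LL n (\<lambda>k. a (n - k))" if "a 0 = 0" "LL n a \<noteq> 0"
  proof -
    have va: "\<forall>k\<le>n. valid n k (a k)" using path_valid that by blast
    then have "valid n n (a n)" by simp
    then have "a n = 0" unfolding valid_def by simp
    moreover have "LL n a = LL n (\<lambda>k. a (n - k))"
      unfolding eq_valid[OF n va] LL_rev[of n a] ..
    ultimately show ?thesis by blast
  qed
  have B: "a 0 = 0 \<and> LL n a = LL n (\<lambda>k. a (n - k))" if "a n = 0" "LL n (\<lambda>k. a (n - k)) \<noteq> 0"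
  proof -
    have b0: "(\<lambda>k. a (n - k)) 0 = 0" using that(1) by simp
    have vb: "\<forall>k\<le>n. valid n k ((\<lambda>k. a (n - k)) k)" by (rule path_valid[OF b0 that(2)])
    have va: "\<forall>k\<le>n. valid n k (a k)"
    proof (intro allI impI)
      fix k assume kn: "k \<le> n"
      have "n - k \<le> n" by simp
      then have "valid n (n - k) (a (n - (n - k)))" using vb by blast
      moreover have "n - (n - k) = k" using kn by simp
      ultimately have "valid n (n - k) (a k)" by simp
      then show "valid n k (a k)" using valid_sym[OF kn] by simp
    qed
    then have "valid n 0 (a 0)" by simp
    then have "a 0 = 0" unfolding valid_def by simp
    moreover have "LL n a = LL n (\<lambda>k. a (n - k))"
      unfolding eq_valid[OF n va] LL_rev[of n a] ..
    ultimately show ?thesis by blast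
  qed
  show ?thesis
  proof (cases "a 0 = 0")
    case True
    show ?thesis
    proof (cases "a n = 0")
      case True2: True
      show ?thesis
      proof (cases "LL n a = 0")
        case True3: True
        then have "LL n (\<lambda>k. a (n - k)) = 0" using B True2 by metis
        then show ?thesis using True True2 True3 by simp
      next
        case False
        then show ?thesis using A True True2 by simp
      qed
    next
      case False
      then have "LL n a = 0" using A[OF True] by metis
      then show ?thesis using True False by simp
    qed
  next
    case False
    then have "a n \<noteq> 0 \<or> LL n (\<lambda>k. a (n - k)) = 0" using B by metis
    then show ?thesis using False by auto
  qed
qed

theorem theorem7:
  fixes n :: nat
  assumes "n \<ge> 2"
  shows "\<forall>us. urn_path_prob n (rev us) = urn_path_prob n us"
proof
  fix us :: "nat list"
  show "urn_path_prob n (rev us) = urn_path_prob n us"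
  proof (cases "length us = n + 1")
    case False
    then show ?thesis unfolding urn_path_prob_def by simp
  next
    case True
    have r: "rev us ! k = us ! (n - k)" if "k \<le> n" for k
      using that True by (simp add: rev_nth)
    have "urn_path_prob n (rev us) = (if us ! n = 0 then LL n (\<lambda>k. us ! (n - k)) else 0)"
      unfolding urn_path_prob_def LL_def using True r
      by (auto intro!: prod.cong)
    also have "\<dots> = (if us ! 0 = 0 then LL n (\<lambda>k. us ! k) else 0)"
      using key[OF assms, of "\<lambda>k. us ! k"] by simp
    also have "\<dots> = urn_path_prob n us"
      unfolding urn_path_prob_def LL_def using True by simp
    finally show ?thesis .
  qed
qed
end
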